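(* Consider the thresholding bandit setting and algorithm LSA with parameter $\alpha$ in the context, with $0<\alpha\le 8$ and $T\ge\max\{40/\alpha+1,40\}K$. Let $f(x)=\alpha x+\ln\alpha+0.5-\alpha$. For every arm $i\in B$ and every $\varkappa\ge\frac{\alpha-\ln\alpha-0.5}{\alpha}$ (with $\Pr(\mathcal{F}_{\Lambda-f(\varkappa)})>0$), \[ \Pr\big(T_i(T)<\lambda_i/20\,\big|\,\mathcal{F}_{\Lambda-f(\varkappa)}\big)\le\frac{\Pr(\overline{\mathcal{M}_{i,\varkappa}})}{\Pr(\mathcal{F}_{\Lambda-f(\varkappa)})}. \]
   Context: $K\ge2$ arms; arm $i$ has reward distribution $\mathcal{D}_i$ on $[0,1]$ with mean $\theta_i$; $\theta\in(0,1)$; $\Delta_i=|\theta_i-\theta|$ (convention $\ln(1/0)=+\infty$). For each $i$, rewards $X_{i,1},X_{i,2},\dots$ from successive pulls of arm $i$ are i.i.d. from $\mathcal{D}_i$, independent across arms; $\hat\Delta_{i,t}=|\frac1t\sum_{s\le t}X_{i,s}-\theta|$. $T_i(t)$ = number of pulls of arm $i$ in the first $t$ rounds; $\hat\Delta_i(t)=\hat\Delta_{i,T_i(t)}$. LSA (parameter $\alpha>0$, budget $T$): pull each arm once in rounds $1..K$; in round $t=K+1,\dots,T$ pull an arm minimizing $\alpha T_i(t-1)(\hat\Delta_i(t-1))^2+0.5\ln T_i(t-1)$. $\xi_i(t)=\alpha T_i(t)(\hat\Delta_i(t))^2+0.5\ln T_i(t)$ for $t\ge K$; $\mathcal{F}_C=\{\exists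 T',K\le T'\le T:\xi_i(T')>C\ \forall i\}$. $M=\max\{40/\alpha+1,40\}$; $g_i(x)=e^{2x}$ if $x\le\ln\Delta_i^{-1}$, $g_i(x)=\frac{x-\ln\Delta_i^{-1}+\alpha}{\alpha\Delta_i^2}$ otherwise; $\Lambda$ is the unique $x\ge0$ with $\sum_ig_i(x)=T/M$; $\lambda_i=g_i(\Lambda)$; $B=\{i:\ln\Delta_i^{-1}<\Lambda\}$. $\mathcal{M}_{i,\varkappa}$ is the event that for all integers $1\le t\le\lambda_i$, $|\hat\Delta_{i,t}-\Delta_i|\le\sqrt{(\lambda_i\Delta_i^2/5-\varkappa/2+\frac1{4\alpha}\ln\frac{\lambda_i}{t})/t}$; $\overline{\mathcal{M}_{i,\varkappa}}$ is its complement. *)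

theory Defs
  imports "HOL-Probability.Probability"
begin

text \<open>Arms are indexed 0,...,K-1; rewards of arm i are X i 1, X i 2, ... .
  Rounds are 1,...,T; lsa_counts ... t i is T_i(t), the number of pulls of arm i
  in the first t rounds.\<close>

definition arm_gap :: "(nat \<Rightarrow> real measure) \<Rightarrow> real \<Rightarrow> nat \<Rightarrow> real" where
  "arm_gap D \<theta> i = \<bar>(\<integral>x. x \<partial>(D i)) - \<theta>\<bar>"

definition emp_gap :: "(nat \<Rightarrow> nat \<Rightarrow> 'a \<Rightarrow> real) \<Rightarrow> real \<Rightarrow> nat \<Rightarrow> nat \<Rightarrow> 'a \<Rightarrow> real" where
  "emp_gap X \<theta> i n \<omega> = \<bar>(\<Sum>s=1..n. X i s \<omega>) / real n - \<theta>\<bar>"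

definition lsa_idx :: "(nat \<Rightarrow> nat \<Rightarrow> 'a \<Rightarrow> real) \<Rightarrow> real \<Rightarrow> real \<Rightarrow> nat \<Rightarrow> nat \<Rightarrow> 'a \<Rightarrow> real" where
  "lsa_idx X \<theta> \<alpha> i n \<omega> = \<alpha> * real n * (emp_gap X \<theta> i n \<omega>)\<^sup>2 + ln (real n) / 2"

text \<open>tb is the tie-breaking rule: given the round, the current counts and the set of
  minimisers of the LSA index, it returns the arm to pull.\<close>
fun lsa_counts :: "(nat \<Rightarrow> nat \<Rightarrow> 'a \<Rightarrow> real) \<Rightarrow> real \<Rightarrow> real \<Rightarrow> nat
    \<Rightarrow> (nat \<Rightarrow> (nat \<Rightarrow> nat) \<Rightarrow> nat set \<Rightarrow> nat) \<Rightarrow> 'a \<Rightarrow> nat \<Rightarrow> nat \<Rightarrow> nat" where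
  "lsa_counts X \<theta> \<alpha> K tb \<omega> 0 = (\<lambda>i. 0)"
| "lsa_counts X \<theta> \<alpha> K tb \<omega> (Suc t) =
     (let c = lsa_counts X \<theta> \<alpha> K tb \<omega> t in
      if t < K then c(t := Suc (c t))
      else (let S = {j. j < K \<and> (\<forall>k<K. lsa_idx X \<theta> \<alpha> j (c j) \<omega> \<le> lsa_idx X \<theta> \<alpha> k (c k) \<omega>)};
                a = tb (Suc t) c S
            in c(a := Suc (c a))))"

definition xi :: "(nat \<Rightarrow> nat \<Rightarrow> 'a \<Rightarrow> real) \<Rightarrow> real \<Rightarrow> real \<Rightarrow> nat
    \<Rightarrow> (nat \<Rightarrow> (nat \<Rightarrow> nat) \<Rightarrow> nat set \<Rightarrow> nat) \<Rightarrow> 'a \<Rightarrow> nat \<Rightarrow> nat \<Rightarrow> real" where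
  "xi X \<theta> \<alpha> K tb \<omega> t i = lsa_idx X \<theta> \<alpha> i (lsa_counts X \<theta> \<alpha> K tb \<omega> t i) \<omega>"

definition F_event :: "'a measure \<Rightarrow> (nat \<Rightarrow> nat \<Rightarrow> 'a \<Rightarrow> real) \<Rightarrow> real \<Rightarrow> real \<Rightarrow> nat
    \<Rightarrow> (nat \<Rightarrow> (nat \<Rightarrow> nat) \<Rightarrow> nat set \<Rightarrow> nat) \<Rightarrow> nat \<Rightarrow> real \<Rightarrow> 'a set" where
  "F_event M X \<theta> \<alpha> K tb T C =
     {\<omega> \<in> space M. \<exists>T'. K \<le> T' \<and> T' \<le> T \<and> (\<forall>i<K. xi X \<theta> \<alpha> K tb \<omega> T' i > C)}"

definition Mconst :: "real \<Rightarrow> real" where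
  "Mconst \<alpha> = max (40 / \<alpha> + 1) 40"

text \<open>g_i; the case Delta_i = 0 corresponds to ln(1/0) = +infinity.\<close>
definition gfun :: "real \<Rightarrow> real \<Rightarrow> real \<Rightarrow> real" where
  "gfun \<alpha> \<Delta> x = (if \<Delta> = 0 \<or> x \<le> ln (1 / \<Delta>) then exp (2 * x)
                    else (x - ln (1 / \<Delta>) + \<alpha>) / (\<alpha> * \<Delta>\<^sup>2))"

definition Lam :: "real \<Rightarrow> (nat \<Rightarrow> real) \<Rightarrow> nat \<Rightarrow> nat \<Rightarrow> real" where
  "Lam \<alpha> \<Delta> K T = (THE x. x \<ge> 0 \<and> (\<Sum>i<K. gfun \<alpha> (\<Delta> i) x) = real T / Mconst \<alpha>)"

definition lam :: "real \<Rightarrow> (nat \<Rightarrow> real) \<Rightarrow> nat \<Rightarrow> nat \<Rightarrow> nat \<Rightarrow> real" where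
  "lam \<alpha> \<Delta> K T i = gfun \<alpha> (\<Delta> i) (Lam \<alpha> \<Delta> K T)"

definition Bset :: "real \<Rightarrow> (nat \<Rightarrow> real) \<Rightarrow> nat \<Rightarrow> nat \<Rightarrow> nat set" where
  "Bset \<alpha> \<Delta> K T = {i. i < K \<and> \<Delta> i > 0 \<and> ln (1 / \<Delta> i) < Lam \<alpha> \<Delta> K T}"

definition M_event :: "'a measure \<Rightarrow> (nat \<Rightarrow> nat \<Rightarrow> 'a \<Rightarrow> real) \<Rightarrow> real \<Rightarrow> real
    \<Rightarrow> (nat \<Rightarrow> real) \<Rightarrow> nat \<Rightarrow> nat \<Rightarrow> nat \<Rightarrow> real \<Rightarrow> 'a set" where
  "M_event M X \<theta> \<alpha> \<Delta> K T i \<kappa> =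
     {\<omega> \<in> space M. \<forall>t::nat. 1 \<le> t \<and> real t \<le> lam \<alpha> \<Delta> K T i \<longrightarrow>
        \<bar>emp_gap X \<theta> i t \<omega> - \<Delta> i\<bar>
          \<le> sqrt ((lam \<alpha> \<Delta> K T i * (\<Delta> i)\<^sup>2 / 5 - \<kappa> / 2
                   + ln (lam \<alpha> \<Delta> K T i / real t) / (4 * \<alpha>)) / real t)}"

end

theory Submission
  imports Defs
begin

lemma num_ln: "7 * ln (20::real) - 8 * ln 9 < 4"
proof -
  have e: "exp 1 > (1 + 1/4::real) powr 4"
    using exp_1_gt_powr[of 4] by simp
  have "(1 + 1/4::real) powr 4 = (5/4)^4" by (simp add: powr_realpow)
  with e have "exp 1 > (5/4::real)^4" by simp
  hence "(exp 1)^4 > ((5/4::real)^4)^4"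
    by (intro power_strict_mono) auto
  hence e4: "exp 4 > (5/4::real)^16"
    by (simp add: exp_of_nat_mult[symmetric] power_mult[symmetric])
  have "(20::real)^7 / 9^8 < (5/4)^16" by (simp add: power_divide)
  hence "(20::real)^7 / 9^8 < exp 4" using e4 by linarith
  hence "ln ((20::real)^7 / 9^8) < ln (exp 4)"
    by (subst ln_less_cancel_iff) auto
  hence "ln ((20::real)^7 / 9^8) < 4" by simp
  moreover have "ln ((20::real)^7 / 9^8) = ln ((20::real)^7) - ln (9^8)"
    using ln_div[of "(20::real)^7" "9^8"] by simp
  moreover have "ln ((20::real)^7) = real 7 * ln 20" by (rule ln_realpow) (simp add: ln_realpow)?
  moreover have "ln ((9::real)^8) = real 8 * ln 9" by (rule ln_realpow) (simp add: ln_realpow)?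
  ultimately show ?thesis by simp
qed

lemma key_y: assumes "y > (0::real)" shows "9/20 * y - ln y - 1/2 + ln 20 / 8 > 0"
proof -
  have "ln (9/20 * y) \<le> 9/20 * y - 1" using assms by (intro ln_le_minus_one) auto
  moreover have "ln (9/20 * y) = ln 9 - ln 20 + ln y" using assms by (simp add: ln_mult ln_div)
  ultimately show ?thesis using num_ln by linarith
qed

lemma core:
  fixes \<alpha> \<Delta> \<Lambda> lam n E E' \<kappa> :: real
  assumes a: "\<alpha> > 0" and d: "\<Delta> > 0" and LL: "ln (1/\<Delta>) < \<Lambda>"
    and lam: "lam = (\<Lambda> - ln (1/\<Delta>) + \<alpha>) / (\<alpha> * \<Delta>\<^sup>2)"
    and n1: "n \<ge> 1" and nl: "n < lam / 20" and E0: "E \<ge> 0"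
    and h1: "\<bar>E - \<Delta>\<bar> \<le> sqrt ((lam * \<Delta>\<^sup>2 / 5 - \<kappa> / 2 + ln (lam / n) / (4 * \<alpha>)) / n)"
    and h2: "\<bar>E' - \<Delta>\<bar> \<le> sqrt ((lam * \<Delta>\<^sup>2 / 5 - \<kappa> / 2 + ln (lam / (20*n)) / (4 * \<alpha>)) / (20*n))"
  shows "\<alpha> * n * E\<^sup>2 + ln n / 2 < \<Lambda> - (\<alpha> * \<kappa> + ln \<alpha> + 1/2 - \<alpha>)"
proof -
  define y where "y = \<Lambda> - ln (1/\<Delta>) + \<alpha>"
  have ya: "y > \<alpha>" using LL y_def by simp
  have y0: "y > 0" using ya a by simp
  have d2: "\<Delta>\<^sup>2 > 0" using d by simp
  have ylam: "\<alpha> * lam * \<Delta>\<^sup>2 = y" using lam y_def a d2 by (simp add: field_simps)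
  have lampos: "lam > 0" using lam y_def y0 a d2 by simp
  define Q where "Q = lam * \<Delta>\<^sup>2 / 5 - \<kappa> / 2"
  define R1 where "R1 = Q + ln (lam / n) / (4 * \<alpha>)"
  define R2 where "R2 = Q + ln (lam / (20*n)) / (4 * \<alpha>)"
  have aQ: "\<alpha> * Q = y/5 - \<alpha> * \<kappa> / 2" using ylam unfolding Q_def by (simp add: algebra_simps)
  have aR1: "\<alpha> * R1 = \<alpha> * Q + (ln lam - ln n) / 4" unfolding R1_def using a lampos n1
    by (simp add: ln_div field_simps)
  have aR2: "\<alpha> * R2 = \<alpha> * Q + (ln lam - ln 20 - ln n) / 4" unfolding R2_def using a lampos n1
    by (simp add: ln_div ln_mult field_simps)
  have "sqrt (R2 / (20*n)) \<ge> 0" using h2 unfolding R2_def Q_def by (meson abs_ge_zero order.trans)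
  hence "R2 / (20*n) \<ge> 0" by simp
  hence R2: "R2 \<ge> 0" using n1 by (simp add: zero_le_divide_iff)
  hence aR2': "\<alpha> * R2 \<ge> 0" using a by simp
  define w where "w = sqrt (R1 / n)"
  have w0: "w \<ge> 0" using h1 unfolding w_def R1_def Q_def by (meson abs_ge_zero order.trans)
  hence "R1 / n \<ge> 0" unfolding w_def by simp
  hence w2: "w\<^sup>2 = R1 / n" unfolding w_def by simp
  have Ew: "E \<le> \<Delta> + w" using h1 unfolding w_def R1_def Q_def by linarith
  have "E\<^sup>2 \<le> (\<Delta> + w)\<^sup>2" using E0 Ew by (intro power_mono) auto
  also have "\<dots> \<le> 3 * \<Delta>\<^sup>2 + 3/2 * w\<^sup>2"
  proof -
    have "(\<Delta> + w)\<^sup>2 = 3 * \<Delta>\<^sup>2 + 3/2 * w\<^sup>2 - (2*\<Delta> - w)\<^sup>2 / 2"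
      by (simp add: power2_eq_square field_simps)
    moreover have "(2*\<Delta> - w)\<^sup>2 \<ge> 0" by simp
    ultimately show ?thesis by linarith
  qed
  finally have "n * E\<^sup>2 \<le> n * (3 * \<Delta>\<^sup>2 + 3/2 * w\<^sup>2)" using n1 by (intro mult_left_mono) auto
  also have "\<dots> = 3 * n * \<Delta>\<^sup>2 + 3/2 * R1" using w2 n1 by (simp add: field_simps)
  finally have "\<alpha> * (n * E\<^sup>2) \<le> \<alpha> * (3 * n * \<Delta>\<^sup>2 + 3/2 * R1)" using a by (intro mult_left_mono) auto
  hence b1: "\<alpha> * n * E\<^sup>2 \<le> 3 * (\<alpha> * n * \<Delta>\<^sup>2) + 3/2 * (\<alpha> * R1)" by (simp add: algebra_simps)
  have "\<alpha> * n * \<Delta>\<^sup>2 < \<alpha> * (lam/20) * \<Delta>\<^sup>2" using nl a d2 by simp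
  hence b2: "\<alpha> * n * \<Delta>\<^sup>2 < y / 20" using ylam by simp
  have llam: "ln lam = ln y - ln \<alpha> - 2 * ln \<Delta>"
  proof -
    have "lam = y / (\<alpha> * \<Delta>\<^sup>2)" using ylam a d2 by (simp add: field_simps)
    thus ?thesis using y0 a d by (simp add: ln_div ln_mult ln_realpow)
  qed
  have lalpha: "ln \<alpha> < ln y" using ya a by simp
  have l1d: "ln (1/\<Delta>) = - ln \<Delta>" using d by (simp add: ln_div)
  have Ly: "\<Lambda> = y + ln (1/\<Delta>) - \<alpha>" using y_def by simp
  show ?thesis using b1 b2 aQ aR1 aR2 aR2' llam lalpha l1d Ly key_y[OF y0] by argo
qed

lemma counts_step: "lsa_counts X \<theta> \<alpha> K tb \<omega> t j \<le> lsa_counts X \<theta> \<alpha> K tb \<omega> (Suc t) j"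
  by (auto simp: Let_def)

lemma counts_mono: "t \<le> t' \<Longrightarrow> lsa_counts X \<theta> \<alpha> K tb \<omega> t j \<le> lsa_counts X \<theta> \<alpha> K tb \<omega> t' j"
proof (induction t' rule: dec_induct)
  case base then show ?case by simp
next
  case (step m) then show ?case using counts_step[of X \<theta> \<alpha> K tb \<omega> m j] by linarith
qed

lemma counts_init: "t \<le> K \<Longrightarrow> lsa_counts X \<theta> \<alpha> K tb \<omega> t j = (if j < t then 1 else 0)"
  by (induction t) (auto simp: Let_def)

lemma counts_pos: "K \<le> t \<Longrightarrow> j < K \<Longrightarrow> lsa_counts X \<theta> \<alpha> K tb \<omega> t j \<ge> 1"
  using counts_mono[of K t X \<theta> \<alpha> K tb \<omega> j] counts_init[of K K X \<theta> \<alpha> tb \<omega> j] by simp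

lemma emp_gap_meas:
  assumes "\<forall>s\<ge>1. X i s \<in> borel_measurable M"
  shows "(\<lambda>\<omega>. emp_gap X \<theta> i t \<omega>) \<in> borel_measurable M"
  unfolding emp_gap_def using assms by (intro borel_measurable_abs borel_measurable_diff borel_measurable_divide borel_measurable_sum) auto

lemma M_event_sets:
  assumes "\<forall>s\<ge>1. X i s \<in> borel_measurable M"
  shows "M_event M X \<theta> \<alpha> \<Delta> K T i \<kappa> \<in> sets M"
  unfolding M_event_def
proof (intro sets.sets_Collect_countable_All allI)
  fix t :: nat
  show "{\<omega> \<in> space M. 1 \<le> t \<and> real t \<le> lam \<alpha> \<Delta> K T i \<longrightarrow>
        \<bar>emp_gap X \<theta> i t \<omega> - \<Delta> i\<bar>
          \<le> sqrt ((lam \<alpha> \<Delta> K T i * (\<Delta> i)\<^sup>2 / 5 - \<kappa> / 2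
                   + ln (lam \<alpha> \<Delta> K T i / real t) / (4 * \<alpha>)) / real t)} \<in> sets M"
    using emp_gap_meas[where X=X and i=i and M=M and \<theta>=\<theta> and t=t, OF assms] by measurable
qed

theorem corollary1:
  fixes M :: "'a measure" and X :: "nat \<Rightarrow> nat \<Rightarrow> 'a \<Rightarrow> real"
    and D :: "nat \<Rightarrow> real measure" and K T i :: nat and \<alpha> \<theta> \<kappa> :: real
    and tb :: "nat \<Rightarrow> (nat \<Rightarrow> nat) \<Rightarrow> nat set \<Rightarrow> nat"
  assumes "prob_space M"
    and "K \<ge> 2"
    and "\<forall>j<K. \<forall>s\<ge>1. X j s \<in> borel_measurable M \<and> distr M borel (X j s) = D j"
    and "\<forall>j<K. \<forall>s\<ge>1. \<forall>\<omega>\<in>space M. 0 \<le> X j s \<omega> \<and> X j s \<omega> \<le> 1"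
    and "prob_space.indep_vars M (\<lambda>_. borel) (\<lambda>p. X (fst p) (snd p)) ({..<K} \<times> {1..})"
    and "0 < \<theta>" and "\<theta> < 1"
    and "0 < \<alpha>" and "\<alpha> \<le> 8"
    and "real T \<ge> max (40 / \<alpha> + 1) 40 * real K"
    and "\<forall>t c S. S \<noteq> {} \<longrightarrow> tb t c S \<in> S"
    and "i \<in> Bset \<alpha> (arm_gap D \<theta>) K T"
    and "\<kappa> \<ge> (\<alpha> - ln \<alpha> - 1/2) / \<alpha>"
    and "measure M (F_event M X \<theta> \<alpha> K tb T
            (Lam \<alpha> (arm_gap D \<theta>) K T - (\<alpha> * \<kappa> + ln \<alpha> + 1/2 - \<alpha>))) > 0"
  shows "measure M ({\<omega> \<in> space M. real (lsa_counts X \<theta> \<alpha> K tb \<omega> T i) < lam \<alpha> (arm_gap D \<theta>) K T i / 20}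
                     \<inter> F_event M X \<theta> \<alpha> K tb T
                         (Lam \<alpha> (arm_gap D \<theta>) K T - (\<alpha> * \<kappa> + ln \<alpha> + 1/2 - \<alpha>)))
           / measure M (F_event M X \<theta> \<alpha> K tb T
                         (Lam \<alpha> (arm_gap D \<theta>) K T - (\<alpha> * \<kappa> + ln \<alpha> + 1/2 - \<alpha>)))
         \<le> measure M (space M - M_event M X \<theta> \<alpha> (arm_gap D \<theta>) K T i \<kappa>)
           / measure M (F_event M X \<theta> \<alpha> K tb T
                         (Lam \<alpha> (arm_gap D \<theta>) K T - (\<alpha> * \<kappa> + ln \<alpha> + 1/2 - \<alpha>)))"
proof -
  interpret P: prob_space M by fact
  define \<Delta> where "\<Delta> = arm_gap D \<theta>"
  define \<Lambda> where "\<Lambda> = Lam \<alpha> \<Delta> K T"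
  define C where "C = \<Lambda> - (\<alpha> * \<kappa> + ln \<alpha> + 1/2 - \<alpha>)"
  define F where "F = F_event M X \<theta> \<alpha> K tb T C"
  define A where "A = {\<omega> \<in> space M. real (lsa_counts X \<theta> \<alpha> K tb \<omega> T i) < lam \<alpha> \<Delta> K T i / 20}"
  define Mv where "Mv = M_event M X \<theta> \<alpha> \<Delta> K T i \<kappa>"
  have iB: "i < K" "\<Delta> i > 0" "ln (1 / \<Delta> i) < \<Lambda>"
    using assms(12) unfolding Bset_def \<Delta>_def \<Lambda>_def by auto
  have lamv: "lam \<alpha> \<Delta> K T i = (\<Lambda> - ln (1 / \<Delta> i) + \<alpha>) / (\<alpha> * (\<Delta> i)\<^sup>2)"
    using iB unfolding lam_def gfun_def \<Lambda>_def by auto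
  have sub: "A \<inter> F \<subseteq> space M - Mv"
  proof
    fix \<omega> assume w: "\<omega> \<in> A \<inter> F"
    hence ws: "\<omega> \<in> space M" unfolding A_def by auto
    from w obtain T' where T': "K \<le> T'" "T' \<le> T" "\<forall>j<K. xi X \<theta> \<alpha> K tb \<omega> T' j > C"
      unfolding F_def F_event_def by auto
    define n where "n = lsa_counts X \<theta> \<alpha> K tb \<omega> T' i"
    have n1: "n \<ge> 1" unfolding n_def by (rule counts_pos[OF T'(1) iB(1)])
    have "n \<le> lsa_counts X \<theta> \<alpha> K tb \<omega> T i" unfolding n_def by (rule counts_mono[OF T'(2)])
    moreover have "real (lsa_counts X \<theta> \<alpha> K tb \<omega> T i) < lam \<alpha> \<Delta> K T i / 20"
      using w unfolding A_def by blast
    ultimately have nl: "real n < lam \<alpha> \<Delta> K T i / 20" by linarith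
    have xiv: "\<alpha> * real n * (emp_gap X \<theta> i n \<omega>)\<^sup>2 + ln (real n) / 2 > C"
      using T'(3) iB(1) unfolding xi_def lsa_idx_def n_def by auto
    show "\<omega> \<in> space M - Mv"
    proof (rule ccontr)
      assume "\<omega> \<notin> space M - Mv"
      hence wm: "\<omega> \<in> Mv" using ws by auto
      have allt: "\<forall>t::nat. 1 \<le> t \<and> real t \<le> lam \<alpha> \<Delta> K T i \<longrightarrow>
        \<bar>emp_gap X \<theta> i t \<omega> - \<Delta> i\<bar>
          \<le> sqrt ((lam \<alpha> \<Delta> K T i * (\<Delta> i)\<^sup>2 / 5 - \<kappa> / 2
                   + ln (lam \<alpha> \<Delta> K T i / real t) / (4 * \<alpha>)) / real t)"
        using wm unfolding Mv_def M_event_def by blast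
      have c1: "1 \<le> n \<and> real n \<le> lam \<alpha> \<Delta> K T i" using n1 nl by simp
      have h1: "\<bar>emp_gap X \<theta> i n \<omega> - \<Delta> i\<bar>
          \<le> sqrt ((lam \<alpha> \<Delta> K T i * (\<Delta> i)\<^sup>2 / 5 - \<kappa> / 2
                   + ln (lam \<alpha> \<Delta> K T i / real n) / (4 * \<alpha>)) / real n)"
        using allt c1 by blast
      have c2: "1 \<le> 20 * n \<and> real (20 * n) \<le> lam \<alpha> \<Delta> K T i" using n1 nl by simp
      have h2': "\<bar>emp_gap X \<theta> i (20*n) \<omega> - \<Delta> i\<bar>
          \<le> sqrt ((lam \<alpha> \<Delta> K T i * (\<Delta> i)\<^sup>2 / 5 - \<kappa> / 2
                   + ln (lam \<alpha> \<Delta> K T i / real (20*n)) / (4 * \<alpha>)) / real (20*n))"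
        using allt c2 by blast
      have r20: "real (20 * n) = 20 * real n" by simp
      have h2: "\<bar>emp_gap X \<theta> i (20*n) \<omega> - \<Delta> i\<bar>
          \<le> sqrt ((lam \<alpha> \<Delta> K T i * (\<Delta> i)\<^sup>2 / 5 - \<kappa> / 2
                   + ln (lam \<alpha> \<Delta> K T i / (20 * real n)) / (4 * \<alpha>)) / (20 * real n))"
        using h2' unfolding r20 .
      have E0: "emp_gap X \<theta> i n \<omega> \<ge> 0" unfolding emp_gap_def by simp
      have n1r: "real n \<ge> 1" using n1 by simp
      have "\<alpha> * real n * (emp_gap X \<theta> i n \<omega>)\<^sup>2 + ln (real n) / 2 < C"
        unfolding C_def
        by (rule core[OF assms(8) iB(2) iB(3) lamv n1r nl E0 h1 h2])
      with xiv show False by linarith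
    qed
  qed
  have Msets: "Mv \<in> sets M" unfolding Mv_def
    by (rule M_event_sets) (use assms(3) iB(1) in auto)
  have Fpos: "measure M F > 0" using assms(14) unfolding F_def C_def \<Lambda>_def \<Delta>_def by simp
  have "measure M (A \<inter> F) \<le> measure M (space M - Mv)"
    by (rule P.finite_measure_mono[OF sub]) (use Msets in auto)
  hence "measure M (A \<inter> F) / measure M F \<le> measure M (space M - Mv) / measure M F"
    using Fpos by (simp add: divide_right_mono)
  thus ?thesis unfolding A_def F_def Mv_def C_def \<Lambda>_def \<Delta>_def .
qed

end
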